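(* Let $(y_t)_{t\in\mathbb{Z}}$ be a strictly stationary sequence of random vectors in $\mathbb{R}^q$ with marginal law $P_0$, and let $P_T:=T^{-1}\sum_{t=1}^T\delta_{y_t}$. Let $k$ be a measurable, symmetric, positive definite, characteristic kernel on $\mathbb{R}^q$ with $\sup_y|k(y,y)|\le 1$, and let $\mathcal{D}$ be the associated Maximum Mean Discrepancy. Let $\{P_\theta;\theta\in\Theta\}$, $\Theta\subset\mathbb{R}^d$, be a family of probability measures on $\mathbb{R}^q$ and $\hat\theta_T\in\arg\min_{\theta\in\Theta}\mathcal{D}(P_\theta,P_T)$. Assume $\Sigma_T=o(T)$ as $T\to\infty$ and the identifiability conditions: (i) the function $\theta\mapsto\mathcal{D}(P_\theta,P_0)$ has a unique minimizer $\theta^*\in\Theta$; and (ii) for every $r>0$, $\inf_{\{\theta\in\Theta:\|\theta-\theta^*\|\ge r\}}\mathcal{D}(P_\theta,P_0)>\mathcal{D}(P_{\theta^*},P_0)$. Then $\hat\theta_T\to\theta^*$ in probability as $T\to\infty$.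
   Context: The kernel $k$ has RKHS $\mathcal{H}$ with $k(u,v)=\langle\Phi(u),\Phi(v)\rangle_{\mathcal{H}}$. For probability measures $P_1,P_2$ on $\mathbb{R}^q$, $\mathcal{D}^2(P_1,P_2)=\mathbb{E}_{X,X'\sim P_1}k(X,X')-2\mathbb{E}_{X\sim P_1,Y'\sim P_2}k(X,Y')+\mathbb{E}_{Y,Y'\sim P_2}k(Y,Y')$ (independent draws). For $t>0$, $\varrho_t:=\left|\mathbb{E}\left\langle k(y_t,\cdot)-\mathbb{E}[k(y_t,\cdot)],\,k(y_0,\cdot)-\mathbb{E}[k(y_0,\cdot)]\right\rangle_{\mathcal{H}}\right|$ and $\Sigma_T:=\sum_{s=1}^T\varrho_s$. *)

theory Defs
  imports "HOL-Probability.Probability" "HOL-Library.Landau_Symbols"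
begin

definition symmetric_kernel :: "('q \<Rightarrow> 'q \<Rightarrow> real) \<Rightarrow> bool" where
  "symmetric_kernel k \<longleftrightarrow> (\<forall>x y. k x y = k y x)"

definition pos_def_kernel :: "('q \<Rightarrow> 'q \<Rightarrow> real) \<Rightarrow> bool" where
  "pos_def_kernel k \<longleftrightarrow>
     (\<forall>(n::nat) (c::nat \<Rightarrow> real) (x::nat \<Rightarrow> 'q).
        0 \<le> (\<Sum>i<n. \<Sum>j<n. c i * c j * k (x i) (x j)))"

definition mean_embedding :: "('q \<Rightarrow> 'q \<Rightarrow> real) \<Rightarrow> 'q measure \<Rightarrow> 'q \<Rightarrow> real" where
  "mean_embedding k P = (\<lambda>x. \<integral>y. k x y \<partial>P)"

definition characteristic_kernel :: "('q::topological_space \<Rightarrow> 'q \<Rightarrow> real) \<Rightarrow> bool" where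
  "characteristic_kernel k \<longleftrightarrow>
     (\<forall>P Q. prob_space P \<longrightarrow> prob_space Q \<longrightarrow> sets P = sets borel \<longrightarrow> sets Q = sets borel
        \<longrightarrow> mean_embedding k P = mean_embedding k Q \<longrightarrow> P = Q)"

definition mmd2 :: "('q \<Rightarrow> 'q \<Rightarrow> real) \<Rightarrow> 'q measure \<Rightarrow> 'q measure \<Rightarrow> real" where
  "mmd2 k P1 P2 =
     (\<integral>z. k (fst z) (snd z) \<partial>(P1 \<Otimes>\<^sub>M P1))
     - 2 * (\<integral>z. k (fst z) (snd z) \<partial>(P1 \<Otimes>\<^sub>M P2))
     + (\<integral>z. k (fst z) (snd z) \<partial>(P2 \<Otimes>\<^sub>M P2))"

definition mmd :: "('q \<Rightarrow> 'q \<Rightarrow> real) \<Rightarrow> 'q measure \<Rightarrow> 'q measure \<Rightarrow> real" where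
  "mmd k P1 P2 = sqrt (mmd2 k P1 P2)"

definition strictly_stationary ::
  "'a measure \<Rightarrow> (int \<Rightarrow> 'a \<Rightarrow> 'q::topological_space) \<Rightarrow> bool" where
  "strictly_stationary M y \<longleftrightarrow>
     (\<forall>J h. finite J \<longrightarrow>
        distr M (PiM J (\<lambda>_. borel)) (\<lambda>\<omega>. \<lambda>t\<in>J. y (t + h) \<omega>)
        = distr M (PiM J (\<lambda>_. borel)) (\<lambda>\<omega>. \<lambda>t\<in>J. y t \<omega>))"

definition empirical_measure ::
  "(int \<Rightarrow> 'a \<Rightarrow> 'q::topological_space) \<Rightarrow> nat \<Rightarrow> 'a \<Rightarrow> 'q measure" where
  "empirical_measure y T \<omega> =
     distr (uniform_measure (count_space UNIV) {1..int T}) borel (\<lambda>t. y t \<omega>)"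

text \<open>rho_t: absolute value of the RKHS covariance
  E<k(y_t,.) - E k(y_t,.), k(y_0,.) - E k(y_0,.)>, written out with the reproducing
  property: it equals |E k(y_t,y_0) - E_{Y,Y' iid P0} k(Y,Y')| where P0 is the
  marginal law (the law of y_0).\<close>
definition rho :: "'a measure \<Rightarrow> ('q::topological_space \<Rightarrow> 'q \<Rightarrow> real)
    \<Rightarrow> (int \<Rightarrow> 'a \<Rightarrow> 'q) \<Rightarrow> int \<Rightarrow> real" where
  "rho M k y t =
     \<bar>(\<integral>\<omega>. k (y t \<omega>) (y 0 \<omega>) \<partial>M)
      - (\<integral>z. k (fst z) (snd z) \<partial>(distr M borel (y 0) \<Otimes>\<^sub>M distr M borel (y 0)))\<bar>"

definition Sigma_T :: "'a measure \<Rightarrow> ('q::topological_space \<Rightarrow> 'q \<Rightarrow> real)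
    \<Rightarrow> (int \<Rightarrow> 'a \<Rightarrow> 'q) \<Rightarrow> nat \<Rightarrow> real" where
  "Sigma_T M k y T = (\<Sum>s=1..T. rho M k y (int s))"

end

theory Submission
  imports Defs
begin

lemma pd_sum:
  fixes k :: "'q \<Rightarrow> 'q \<Rightarrow> real" and n :: nat and c :: "nat \<Rightarrow> real" and x :: "nat \<Rightarrow> 'q"
  assumes "pos_def_kernel k"
  shows "0 \<le> (\<Sum>i<n. \<Sum>j<n. c i * c j * k (x i) (x j))"
  using assms unfolding pos_def_kernel_def by blast

lemma k_diag_nonneg:
  assumes "pos_def_kernel k" shows "0 \<le> k x x"
proof -
  have H: "\<And>(n::nat) c xs. 0 \<le> (\<Sum>i<n. \<Sum>j<n. c i * c j * k (xs i) (xs j))"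
    using assms unfolding pos_def_kernel_def by blast
  show ?thesis using H[where n="Suc 0" and c="\<lambda>_. 1" and xs="\<lambda>_. x"] by simp
qed

lemma k_bound:
  assumes "pos_def_kernel k" "symmetric_kernel k" "\<And>x. \<bar>k x x\<bar> \<le> 1"
  shows "\<bar>k x y\<bar> \<le> 1"
proof -
  have sym: "k y x = k x y" using assms(2) unfolding symmetric_kernel_def by simp
  have H: "\<And>(n::nat) c xs. 0 \<le> (\<Sum>i<n. \<Sum>j<n. c i * c j * k (xs i) (xs j))"
    using assms unfolding pos_def_kernel_def by blast
  have h: "0 \<le> k x x + s * k x y + s * k y x + s * s * k y y" for s :: real
    using H[where n="Suc (Suc 0)" and c="\<lambda>i. if i = 0 then 1 else s" and xs="\<lambda>i. if i = 0 then x else y"]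
    by (simp add: algebra_simps)
  from h[of 1] h[of "-1"] assms(3)[of x] assms(3)[of y] show ?thesis using sym by (auto simp: abs_le_iff)
qed


lemma integral_pair_coords:
  fixes f :: "'b \<times> 'b \<Rightarrow> real"
  assumes M: "\<And>i. prob_space (M i)"
    and fm: "f \<in> borel_measurable (M i \<Otimes>\<^sub>M M j)" and fb: "\<And>z. \<bar>f z\<bar> \<le> B"
    and ij: "i \<noteq> j" "i \<in> I" "j \<in> I" and fin: "finite I"
  shows "(\<integral>\<omega>. f (\<omega> i, \<omega> j) \<partial>PiM I M) = (\<integral>z. f z \<partial>(M i \<Otimes>\<^sub>M M j))"
proof -
  interpret product_prob_space M I using M by (simp add: product_prob_space_def product_prob_space_axioms_def product_sigma_finite_def prob_space_imp_sigma_finite)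
  interpret PP: pair_sigma_finite "M i" "M j" by unfold_locales
  interpret PIJ: prob_space "PiM {i,j} M" by (rule prob_space_PiM) (rule M)
  interpret PMM: prob_space "M i \<Otimes>\<^sub>M M j" by (rule prob_space_pair) (rule M)+
  have gm: "(\<lambda>x. f (x i, x j)) \<in> borel_measurable (PiM {i,j} M)"
    using fm by measurable
  have gi: "integrable (PiM {i,j} M) (\<lambda>x. f (x i, x j))"
    by (rule PIJ.integrable_const_bound[where B=B]) (use fb gm in auto)
  have "(\<integral>\<omega>. f (\<omega> i, \<omega> j) \<partial>PiM I M) = (\<integral>x. f (x i, x j) \<partial>PiM {i,j} M)"
  proof -
    have "(\<integral>x. f (x i, x j) \<partial>PiM {i,j} M)
        = (\<integral>x. f (x i, x j) \<partial>distr (PiM I M) (PiM {i,j} M) (\<lambda>f. restrict f {i,j}))"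
      using distr_restrict[of "{i,j}" I] ij fin by simp
    also have "\<dots> = (\<integral>\<omega>. f (restrict \<omega> {i,j} i, restrict \<omega> {i,j} j) \<partial>PiM I M)"
      by (rule integral_distr) (use ij gm in \<open>auto intro!: measurable_restrict_subset\<close>)
    finally show ?thesis by simp
  qed
  also have "\<dots> = (\<integral>x. f (x i, x j) \<partial>PiM ({i} \<union> {j}) M)" by (simp add: insert_commute)
  also have "\<dots> = (\<integral>x. (\<integral>y. f (merge {i} {j} (x, y) i, merge {i} {j} (x, y) j) \<partial>PiM {j} M) \<partial>PiM {i} M)"
    by (rule product_integral_fold) (use ij gi in \<open>auto simp: insert_commute\<close>)
  also have "\<dots> = (\<integral>x. (\<integral>y. f (x i, y j) \<partial>PiM {j} M) \<partial>PiM {i} M)"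
    using ij by simp
  also have "\<dots> = (\<integral>x. (\<integral>b. f (x i, b) \<partial>M j) \<partial>PiM {i} M)"
    by (rule Bochner_Integration.integral_cong[OF refl], rule product_integral_singleton) (use fm in \<open>auto intro!: measurable_Pair2 simp: space_PiM PiE_iff\<close>)
  also have "\<dots> = (\<integral>a. (\<integral>b. f (a, b) \<partial>M j) \<partial>M i)"
  proof (rule product_integral_singleton)
    have "(\<lambda>a. \<integral>b. (\<lambda>a b. f (a, b)) a b \<partial>M j) \<in> borel_measurable (M i)"
      by (rule M.borel_measurable_lebesgue_integral) (use fm in simp)
    then show "(\<lambda>a. \<integral>b. f (a, b) \<partial>M j) \<in> borel_measurable (M i)" by simp
  qed
  also have "\<dots> = (\<integral>z. f z \<partial>(M i \<Otimes>\<^sub>M M j))"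
    by (rule PP.integral_fst') (use fm fb in \<open>auto intro!: PMM.integrable_const_bound[where B=B]\<close>)
  finally show ?thesis .
qed


definition gram :: "('q \<Rightarrow> 'q \<Rightarrow> real) \<Rightarrow> 'q measure \<Rightarrow> 'q measure \<Rightarrow> real" where
  "gram k P Q = (\<integral>z. k (fst z) (snd z) \<partial>(P \<Otimes>\<^sub>M Q))"

lemma gram_psd_N:
  fixes k :: "'q::topological_space \<Rightarrow> 'q \<Rightarrow> real"
    and N :: nat
  assumes k_meas: "(\<lambda>z. k (fst z) (snd z)) \<in> borel_measurable (borel \<Otimes>\<^sub>M borel)"
    and pd: "pos_def_kernel k" and kb: "\<And>x y. \<bar>k x y\<bar> \<le> 1"
    and M: "\<And>i. prob_space (M i)" and Ms: "\<And>i. sets (M i) = sets borel"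
  shows "0 \<le> (\<Sum>i<N. \<Sum>j<N. c i * c j *
     (if i = j then (\<integral>x. k x x \<partial>M i) else gram k (M i) (M j)))"
proof -
  interpret product_prob_space M "{..<N}" using M by (simp add: product_prob_space_def product_prob_space_axioms_def product_sigma_finite_def prob_space_imp_sigma_finite)
  have km: "(\<lambda>z. k (fst z) (snd z)) \<in> borel_measurable (M i \<Otimes>\<^sub>M M j)" for i j
    by (subst measurable_cong_sets[OF sets_pair_measure_cong[OF Ms[of i] Ms[of j]] refl]) (rule k_meas)
  have cm: "(\<lambda>\<omega>. k (\<omega> i) (\<omega> j)) \<in> borel_measurable (PiM {..<N} M)" if "i < N" "j < N" for i j
  proof -
    have "(\<lambda>\<omega>. (\<omega> i, \<omega> j)) \<in> measurable (PiM {..<N} M) (M i \<Otimes>\<^sub>M M j)"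
      using that by (auto intro!: measurable_Pair measurable_component_singleton)
    from measurable_compose[OF this km] show ?thesis by simp
  qed
  have ci: "integrable (PiM {..<N} M) (\<lambda>\<omega>. k (\<omega> i) (\<omega> j))" if "i < N" "j < N" for i j
    by (rule P.integrable_const_bound[where B=1]) (use kb cm[OF that] in auto)
  have trm: "(\<integral>\<omega>. k (\<omega> i) (\<omega> j) \<partial>PiM {..<N} M) =
      (if i = j then (\<integral>x. k x x \<partial>M i) else gram k (M i) (M j))" if "i < N" "j < N" for i j
  proof (cases "i = j")
    case True
    have dm: "(\<lambda>x. k x x) \<in> borel_measurable (M i)"
    proof -
      have "(\<lambda>x. (x, x)) \<in> measurable (M i) (M i \<Otimes>\<^sub>M M i)" by measurable
      from measurable_compose[OF this km] show ?thesis by simp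
    qed
    have "(\<integral>x. k x x \<partial>M i) = (\<integral>x. k x x \<partial>distr (PiM {..<N} M) (M i) (\<lambda>\<omega>. \<omega> i))"
      using PiM_component[of i] that by simp
    also have "\<dots> = (\<integral>\<omega>. k (\<omega> i) (\<omega> i) \<partial>PiM {..<N} M)"
      by (rule integral_distr) (use that dm in auto)
    finally show ?thesis using True by simp
  next
    case False
    have "(\<integral>\<omega>. (\<lambda>z. k (fst z) (snd z)) (\<omega> i, \<omega> j) \<partial>PiM {..<N} M) = (\<integral>z. k (fst z) (snd z) \<partial>(M i \<Otimes>\<^sub>M M j))"
      by (rule integral_pair_coords[where B=1]) (use M km kb False that in auto)
    then show ?thesis using False by (simp add: gram_def)
  qed
  have "0 \<le> (\<integral>\<omega>. (\<Sum>i<N. \<Sum>j<N. c i * c j * k (\<omega> i) (\<omega> j)) \<partial>PiM {..<N} M)"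
    by (rule Bochner_Integration.integral_nonneg) (rule pd_sum[OF pd])
  also have "\<dots> = (\<Sum>i<N. \<Sum>j<N. c i * c j * (\<integral>\<omega>. k (\<omega> i) (\<omega> j) \<partial>PiM {..<N} M))"
  proof -
    have "(\<integral>\<omega>. (\<Sum>i<N. \<Sum>j<N. c i * c j * k (\<omega> i) (\<omega> j)) \<partial>PiM {..<N} M)
       = (\<Sum>i<N. (\<integral>\<omega>. (\<Sum>j<N. c i * c j * k (\<omega> i) (\<omega> j)) \<partial>PiM {..<N} M))"
      by (rule Bochner_Integration.integral_sum) (auto intro!: Bochner_Integration.integrable_sum integrable_mult_right ci)
    also have "\<dots> = (\<Sum>i<N. \<Sum>j<N. (\<integral>\<omega>. c i * c j * k (\<omega> i) (\<omega> j) \<partial>PiM {..<N} M))"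
      by (intro sum.cong refl Bochner_Integration.integral_sum) (auto intro!: integrable_mult_right ci)
    finally show ?thesis by simp
  qed
  also have "\<dots> = (\<Sum>i<N. \<Sum>j<N. c i * c j *
     (if i = j then (\<integral>x. k x x \<partial>M i) else gram k (M i) (M j)))"
    using trm by (intro sum.cong refl) simp
  finally show ?thesis .
qed


lemma sum_lessThan_add_split:
  fixes g :: "nat \<Rightarrow> real"
  shows "(\<Sum>i<p + m. g i) = (\<Sum>i<p. g i) + (\<Sum>a<m. g (p + a))"
  by (induction m) (simp_all add: algebra_simps)

lemma sum_mod_rep:
  fixes f :: "nat \<Rightarrow> real"
  shows "(\<Sum>i<m*n. f (i mod m)) = real n * (\<Sum>a<m. f a)"
proof (induction n)
  case 0 then show ?case by simp
next
  case (Suc n)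
  have "(\<Sum>i<m*Suc n. f (i mod m)) = (\<Sum>i<m*n + m. f (i mod m))" by (simp add: algebra_simps)
  also have "\<dots> = (\<Sum>i<m*n. f (i mod m)) + (\<Sum>a<m. f ((m*n + a) mod m))"
    by (rule sum_lessThan_add_split) 
  also have "(\<Sum>a<m. f ((m*n + a) mod m)) = (\<Sum>a<m. f a)"
    by (intro sum.cong refl) simp
  finally show ?case using Suc by (simp add: algebra_simps)
qed

lemma real_nonneg_from_n:
  fixes Q E :: real
  assumes "\<And>n::nat. n \<ge> 1 \<Longrightarrow> 0 \<le> real n * real n * Q + real n * E"
  shows "0 \<le> Q"
proof (rule ccontr)
  assume "\<not> 0 \<le> Q"
  then have Qn: "Q < 0" by simp
  define n where "n = nat (ceiling (\<bar>E\<bar> / (- Q))) + 1"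
  have n1: "n \<ge> 1" by (simp add: n_def)
  have "\<bar>E\<bar> / (- Q) \<le> real (nat (ceiling (\<bar>E\<bar> / (- Q))))" by linarith
  then have "\<bar>E\<bar> / (- Q) < real n" by (simp add: n_def)
  then have "\<bar>E\<bar> < real n * (- Q)" using Qn by (simp add: field_simps)
  then have "real n * Q + E < 0" by (simp add: algebra_simps abs_less_iff)
  then have "real n * (real n * Q + E) < 0" using n1 by (intro mult_pos_neg) auto
  with assms[OF n1] show False by (simp add: algebra_simps)
qed


lemma gram_psd:
  fixes k :: "'q::topological_space \<Rightarrow> 'q \<Rightarrow> real" and m :: nat and c :: "nat \<Rightarrow> real"
  assumes k_meas: "(\<lambda>z. k (fst z) (snd z)) \<in> borel_measurable (borel \<Otimes>\<^sub>M borel)"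
    and pd: "pos_def_kernel k" and kb: "\<And>x y. \<bar>k x y\<bar> \<le> 1"
    and P: "\<And>a. prob_space (P a)" and Ps: "\<And>a. sets (P a) = sets borel"
  shows "0 \<le> (\<Sum>a<m. \<Sum>b<m. c a * c b * gram k (P a) (P b))"
proof -
  define G where "G a b = gram k (P a) (P b)" for a b
  define D where "D a = (\<integral>x. k x x \<partial>P a)" for a
  define Q where "Q = (\<Sum>a<m. \<Sum>b<m. c a * c b * G a b)"
  define E where "E = (\<Sum>a<m. c a * c a * (D a - G a a))"
  have "0 \<le> real n * real n * Q + real n * E" if "n \<ge> 1" for n :: nat
  proof -
    have "0 \<le> (\<Sum>i<m*n. \<Sum>j<m*n. c (i mod m) * c (j mod m) *
     (if i = j then (\<integral>x. k x x \<partial>P (i mod m)) else gram k (P (i mod m)) (P (j mod m))))"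
      by (rule gram_psd_N[where M="\<lambda>i. P (i mod m)" and c="\<lambda>i. c (i mod m)"]) (use assms in auto)
    also have "\<dots> = (\<Sum>i<m*n. \<Sum>j<m*n. c (i mod m) * c (j mod m) * G (i mod m) (j mod m)
        + (if i = j then c (i mod m) * c (i mod m) * (D (i mod m) - G (i mod m) (i mod m)) else 0))"
      by (intro sum.cong refl) (auto simp: G_def D_def algebra_simps)
    also have "\<dots> = (\<Sum>i<m*n. \<Sum>j<m*n. c (i mod m) * c (j mod m) * G (i mod m) (j mod m))
        + (\<Sum>i<m*n. c (i mod m) * c (i mod m) * (D (i mod m) - G (i mod m) (i mod m)))"
      by (simp add: sum.distrib)
    also have "(\<Sum>i<m*n. \<Sum>j<m*n. c (i mod m) * c (j mod m) * G (i mod m) (j mod m))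
        = (\<Sum>i<m*n. real n * (\<Sum>b<m. c (i mod m) * c b * G (i mod m) b))"
      by (intro sum.cong refl sum_mod_rep[where f="\<lambda>b. c (_ mod m) * c b * G (_ mod m) b"])
    also have "\<dots> = real n * real n * Q"
      using sum_mod_rep[where f="\<lambda>a. real n * (\<Sum>b<m. c a * c b * G a b)" and m=m and n=n]
      by (simp add: Q_def sum_distrib_left mult.assoc)
    also have "(\<Sum>i<m*n. c (i mod m) * c (i mod m) * (D (i mod m) - G (i mod m) (i mod m))) = real n * E"
      using sum_mod_rep[where f="\<lambda>a. c a * c a * (D a - G a a)" and m=m and n=n] by (simp add: E_def)
    finally show ?thesis .
  qed
  then have "0 \<le> Q" by (rule real_nonneg_from_n)
  then show ?thesis by (simp add: Q_def G_def)
qed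


lemma sqrt_tri_alg:
  fixes x w z :: real
  assumes q: "\<And>t. 0 \<le> t*t*x + 2*t*w + z" and x: "0 \<le> x" and z: "0 \<le> z"
  shows "sqrt (x + 2*w + z) \<le> sqrt x + sqrt z"
proof -
  have wle: "w \<le> sqrt x * sqrt z"
  proof (cases "w \<le> 0")
    case True then show ?thesis using x z by (meson order.trans mult_nonneg_nonneg real_sqrt_ge_zero)
  next
    case False
    then have wp: "w > 0" by simp
    show ?thesis
    proof (cases "x = 0")
      case True
      have "0 \<le> 2 * (-(z+1)/(2*w)) * w + z" using q[of "-(z+1)/(2*w)"] True by simp
      also have "2 * (-(z+1)/(2*w)) * w + z = -1" using wp by (simp add: field_simps)
      finally show ?thesis by simp
    next
      case False
      then have xp: "x > 0" using x by simp
      have "0 \<le> (-w/x)*(-w/x)*x + 2*(-w/x)*w + z" by (rule q)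
      also have "(-w/x)*(-w/x)*x + 2*(-w/x)*w + z = z - w*w/x" using xp by (simp add: field_simps)
      finally have "w*w \<le> x*z" using xp by (simp add: field_simps)
      then have "sqrt (w*w) \<le> sqrt (x*z)" by (rule real_sqrt_le_mono)
      then show ?thesis using wp by (simp add: real_sqrt_mult)
    qed
  qed
  have "(sqrt x + sqrt z)^2 = x + z + 2 * (sqrt x * sqrt z)" using x z by (simp add: power2_eq_square algebra_simps)
  then have "x + 2*w + z \<le> (sqrt x + sqrt z)^2" using wle by simp
  then show ?thesis by (intro real_le_lsqrt) (use x z in auto)
qed

lemma sum3: "(\<Sum>a<(3::nat). f a) = f 0 + f 1 + (f 2 :: real)"
  by (simp add: numeral_3_eq_3 numeral_2_eq_2 lessThan_Suc)

lemma gram_sym: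
  fixes k :: "'q::topological_space \<Rightarrow> 'q \<Rightarrow> real"
  assumes k_meas: "(\<lambda>z. k (fst z) (snd z)) \<in> borel_measurable (borel \<Otimes>\<^sub>M borel)"
    and sym: "symmetric_kernel k"
    and P: "prob_space P" "sets P = sets borel" and Q: "prob_space Q" "sets Q = sets borel"
  shows "gram k P Q = gram k Q P"
proof -
  interpret P: prob_space P by (rule P)
  interpret Q: prob_space Q by (rule Q)
  interpret PQ: pair_sigma_finite P Q by unfold_locales
  have km: "(\<lambda>z. k (fst z) (snd z)) \<in> borel_measurable (P \<Otimes>\<^sub>M Q)"
    by (subst measurable_cong_sets[OF sets_pair_measure_cong[OF P(2) Q(2)] refl]) (rule k_meas)
  have "gram k Q P = (\<integral>(x,y). (\<lambda>z. k (fst z) (snd z)) (y,x) \<partial>(Q \<Otimes>\<^sub>M P))"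
    using sym by (simp add: gram_def symmetric_kernel_def case_prod_beta')
  also have "\<dots> = gram k P Q" unfolding gram_def by (rule PQ.integral_product_swap[OF km])
  finally show ?thesis by simp
qed


lemma mmd2_gram: "mmd2 k P Q = gram k P P - 2 * gram k P Q + gram k Q Q"
  by (simp add: mmd2_def gram_def)

lemma gram_psd3:
  fixes k :: "'q::topological_space \<Rightarrow> 'q \<Rightarrow> real"
  assumes k_meas: "(\<lambda>z. k (fst z) (snd z)) \<in> borel_measurable (borel \<Otimes>\<^sub>M borel)"
    and pd: "pos_def_kernel k" and kb: "\<And>x y. \<bar>k x y\<bar> \<le> 1"
    and P1: "prob_space P1" "sets P1 = sets borel"
    and P2: "prob_space P2" "sets P2 = sets borel"
    and P3: "prob_space P3" "sets P3 = sets borel"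
  shows "0 \<le> c1*c1*gram k P1 P1 + c1*c2*gram k P1 P2 + c1*c3*gram k P1 P3
            + c2*c1*gram k P2 P1 + c2*c2*gram k P2 P2 + c2*c3*gram k P2 P3
            + c3*c1*gram k P3 P1 + c3*c2*gram k P3 P2 + c3*c3*gram k P3 P3"
proof -
  define P where "P a = (if a = 0 then P1 else if a = 1 then P2 else P3)" for a :: nat
  define c where "c a = (if a = 0 then c1 else if a = 1 then c2 else c3)" for a :: nat
  have "0 \<le> (\<Sum>a<3. \<Sum>b<3. c a * c b * gram k (P a) (P b))"
    by (rule gram_psd) (use assms in \<open>auto simp: P_def\<close>)
  then show ?thesis by (simp add: sum3 P_def c_def algebra_simps)
qed

lemma mmd2_nonneg:
  fixes k :: "'q::topological_space \<Rightarrow> 'q \<Rightarrow> real"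
  assumes k_meas: "(\<lambda>z. k (fst z) (snd z)) \<in> borel_measurable (borel \<Otimes>\<^sub>M borel)"
    and pd: "pos_def_kernel k" and sym: "symmetric_kernel k" and kb: "\<And>x y. \<bar>k x y\<bar> \<le> 1"
    and P1: "prob_space P1" "sets P1 = sets borel"
    and P2: "prob_space P2" "sets P2 = sets borel"
  shows "0 \<le> mmd2 k P1 P2"
proof -
  have "0 \<le> 1*1*gram k P1 P1 + 1*(-1)*gram k P1 P2 + 1*0*gram k P1 P2
            + (-1)*1*gram k P2 P1 + (-1)*(-1)*gram k P2 P2 + (-1)*0*gram k P2 P2
            + 0*1*gram k P2 P1 + 0*(-1)*gram k P2 P2 + 0*0*gram k P2 P2"
    by (rule gram_psd3) (use assms in auto)
  moreover have "gram k P2 P1 = gram k P1 P2" by (rule gram_sym) (use assms in auto)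
  ultimately show ?thesis by (simp add: mmd2_gram)
qed

lemma mmd_sym:
  fixes k :: "'q::topological_space \<Rightarrow> 'q \<Rightarrow> real"
  assumes k_meas: "(\<lambda>z. k (fst z) (snd z)) \<in> borel_measurable (borel \<Otimes>\<^sub>M borel)"
    and sym: "symmetric_kernel k"
    and P1: "prob_space P1" "sets P1 = sets borel"
    and P2: "prob_space P2" "sets P2 = sets borel"
  shows "mmd k P1 P2 = mmd k P2 P1"
proof -
  have "gram k P2 P1 = gram k P1 P2" by (rule gram_sym) (use assms in auto)
  then show ?thesis by (simp add: mmd_def mmd2_gram)
qed

lemma mmd_triangle:
  fixes k :: "'q::topological_space \<Rightarrow> 'q \<Rightarrow> real"
  assumes k_meas: "(\<lambda>z. k (fst z) (snd z)) \<in> borel_measurable (borel \<Otimes>\<^sub>M borel)"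
    and pd: "pos_def_kernel k" and sym: "symmetric_kernel k" and kb: "\<And>x y. \<bar>k x y\<bar> \<le> 1"
    and P1: "prob_space P1" "sets P1 = sets borel"
    and P2: "prob_space P2" "sets P2 = sets borel"
    and P3: "prob_space P3" "sets P3 = sets borel"
  shows "mmd k P1 P3 \<le> mmd k P1 P2 + mmd k P2 P3"
proof -
  have s12: "gram k P2 P1 = gram k P1 P2" by (rule gram_sym) (use assms in auto)
  have s13: "gram k P3 P1 = gram k P1 P3" by (rule gram_sym) (use assms in auto)
  have s23: "gram k P3 P2 = gram k P2 P3" by (rule gram_sym) (use assms in auto)
  define x where "x = mmd2 k P1 P2"
  define z where "z = mmd2 k P2 P3"
  define w where "w = gram k P1 P2 - gram k P1 P3 - gram k P2 P2 + gram k P2 P3"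
  have q: "0 \<le> t*t*x + 2*t*w + z" for t
  proof -
    have "0 \<le> t*t*gram k P1 P1 + t*(1-t)*gram k P1 P2 + t*(-1)*gram k P1 P3
            + (1-t)*t*gram k P2 P1 + (1-t)*(1-t)*gram k P2 P2 + (1-t)*(-1)*gram k P2 P3
            + (-1)*t*gram k P3 P1 + (-1)*(1-t)*gram k P3 P2 + (-1)*(-1)*gram k P3 P3"
      by (rule gram_psd3) (use assms in auto)
    then show ?thesis unfolding x_def z_def w_def mmd2_gram s12 s13 s23
      by (simp add: algebra_simps)
  qed
  have x0: "0 \<le> x" unfolding x_def by (rule mmd2_nonneg) (use assms in auto)
  have z0: "0 \<le> z" unfolding z_def by (rule mmd2_nonneg) (use assms in auto)
  have "mmd2 k P1 P3 = x + 2*w + z" unfolding x_def z_def w_def mmd2_gram by simp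
  then show ?thesis using sqrt_tri_alg[OF q x0 z0] by (simp add: mmd_def x_def z_def)
qed


lemma integral_uniform_count_UNIV:
  fixes f :: "'a \<Rightarrow> real"
  assumes A: "finite A" "A \<noteq> {}"
  shows "(\<integral>x. f x \<partial>uniform_measure (count_space UNIV) A) = (\<Sum>a\<in>A. f a) / real (card A)"
proof -
  have cA: "card A > 0" using A by (simp add: card_gt_0_iff)
  have eq: "uniform_measure (count_space UNIV) A = density (count_space UNIV) (\<lambda>x. ennreal (indicator A x / real (card A)))"
    unfolding uniform_measure_def
  proof (intro density_cong)
    show "AE x in count_space UNIV. indicator A x / emeasure (count_space UNIV) A = ennreal (indicator A x / real (card A))"
    proof (rule AE_I2)
      fix x
      have d: "1 / ennreal (real (card A)) = ennreal (1 / real (card A))"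
        using divide_ennreal[of 1 "real (card A)"] cA by simp
      show "indicator A x / emeasure (count_space UNIV) A = ennreal (indicator A x / real (card A))"
        using A cA d by (auto simp: emeasure_count_space_finite indicator_def ennreal_of_nat_eq_real_of_nat)
    qed
  qed auto
  have "(\<integral>x. f x \<partial>uniform_measure (count_space UNIV) A) = (\<integral>x. (indicator A x / real (card A)) *\<^sub>R f x \<partial>count_space UNIV)"
    unfolding eq by (rule integral_density) auto
  also have "\<dots> = (\<Sum>a | a \<in> UNIV \<and> (indicator A a / real (card A)) *\<^sub>R f a \<noteq> 0. (indicator A a / real (card A)) *\<^sub>R f a)"
    by (rule lebesgue_integral_count_space_finite_support) (rule finite_subset[OF _ A(1)], auto simp: indicator_def)
  also have "\<dots> = (\<Sum>a\<in>A. (indicator A a / real (card A)) *\<^sub>R f a)"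
    by (rule sum.mono_neutral_cong_left) (use A in \<open>auto simp: indicator_def\<close>)
  also have "\<dots> = (\<Sum>a\<in>A. f a) / real (card A)"
    by (simp add: sum_divide_distrib)
  finally show ?thesis .
qed


lemma k_meas_pair:
  fixes k :: "'q::topological_space \<Rightarrow> 'q \<Rightarrow> real"
  assumes k_meas: "(\<lambda>z. k (fst z) (snd z)) \<in> borel_measurable (borel \<Otimes>\<^sub>M borel)"
    and P: "sets P = sets borel" and Q: "sets Q = sets borel"
  shows "(\<lambda>z. k (fst z) (snd z)) \<in> borel_measurable (P \<Otimes>\<^sub>M Q)"
  by (subst measurable_cong_sets[OF sets_pair_measure_cong[OF P Q] refl]) (rule k_meas)

lemma gram_fst:
  fixes k :: "'q::topological_space \<Rightarrow> 'q \<Rightarrow> real"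
  assumes k_meas: "(\<lambda>z. k (fst z) (snd z)) \<in> borel_measurable (borel \<Otimes>\<^sub>M borel)"
    and kb: "\<And>x y. \<bar>k x y\<bar> \<le> 1"
    and P: "prob_space P" "sets P = sets borel" and Q: "prob_space Q" "sets Q = sets borel"
  shows "gram k P Q = (\<integral>x. (\<integral>z. k x z \<partial>Q) \<partial>P)"
    and "(\<lambda>x. \<integral>z. k x z \<partial>Q) \<in> borel_measurable borel"
proof -
  interpret P: prob_space P by (rule P)
  interpret Q: prob_space Q by (rule Q)
  interpret PQ: pair_sigma_finite P Q by unfold_locales
  interpret PQp: prob_space "P \<Otimes>\<^sub>M Q" by (rule prob_space_pair) (rule P, rule Q)
  have km: "(\<lambda>z. k (fst z) (snd z)) \<in> borel_measurable (P \<Otimes>\<^sub>M Q)"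
    by (rule k_meas_pair[OF k_meas P(2) Q(2)])
  have "(\<integral>x. (\<integral>z. (\<lambda>z. k (fst z) (snd z)) (x, z) \<partial>Q) \<partial>P) = gram k P Q"
    unfolding gram_def by (rule PQ.integral_fst') (rule PQp.integrable_const_bound[where B=1], use kb km in auto)
  then show "gram k P Q = (\<integral>x. (\<integral>z. k x z \<partial>Q) \<partial>P)" by simp
  have kmb: "(\<lambda>z. k (fst z) (snd z)) \<in> borel_measurable (borel \<Otimes>\<^sub>M Q)"
    by (rule k_meas_pair[OF k_meas _ Q(2)]) simp
  have "(\<lambda>x. \<integral>z. (\<lambda>x z. k x z) x z \<partial>Q) \<in> borel_measurable borel"
    by (rule Q.borel_measurable_lebesgue_integral) (use kmb in \<open>simp add: case_prod_beta'\<close>)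
  then show "(\<lambda>x. \<integral>z. k x z \<partial>Q) \<in> borel_measurable borel" by simp
qed

lemma emp_facts:
  fixes y :: "int \<Rightarrow> 'a \<Rightarrow> 'q::topological_space"
  assumes T: "T \<ge> 1"
  shows "prob_space (empirical_measure y T \<omega>)" and "sets (empirical_measure y T \<omega>) = sets borel"
    and "\<And>f. f \<in> borel_measurable borel \<Longrightarrow>
       (\<integral>x. f x \<partial>empirical_measure y T \<omega>) = (\<Sum>t\<in>{1..int T}. f (y t \<omega>)) / real T"
proof -
  let ?U = "uniform_measure (count_space UNIV) {1..int T}"
  have ne: "{1..int T} \<noteq> {}" using T by simp
  have um: "(\<lambda>t. y t \<omega>) \<in> measurable ?U borel"
    by (subst measurable_cong_sets[of _ "count_space UNIV" borel borel]) auto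
  have "prob_space ?U"
    by (rule prob_space_uniform_measure) (use ne in \<open>auto simp: emeasure_count_space_finite\<close>)
  then show "prob_space (empirical_measure y T \<omega>)"
    unfolding empirical_measure_def by (rule prob_space.prob_space_distr) (rule um)
  show "sets (empirical_measure y T \<omega>) = sets borel" by (simp add: empirical_measure_def)
  fix f :: "'q \<Rightarrow> real" assume f: "f \<in> borel_measurable borel"
  have "(\<integral>x. f x \<partial>empirical_measure y T \<omega>) = (\<integral>t. f (y t \<omega>) \<partial>?U)"
    unfolding empirical_measure_def by (rule integral_distr[OF um f])
  also have "\<dots> = (\<Sum>t\<in>{1..int T}. f (y t \<omega>)) / real (card {1..int T})"
    by (rule integral_uniform_count_UNIV) (use ne in auto)
  also have "real (card {1..int T}) = real T" by simp
  finally show "(\<integral>x. f x \<partial>empirical_measure y T \<omega>) = (\<Sum>t\<in>{1..int T}. f (y t \<omega>)) / real T" .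
qed


lemma k_slices:
  fixes k :: "'q::topological_space \<Rightarrow> 'q \<Rightarrow> real"
  assumes k_meas: "(\<lambda>z. k (fst z) (snd z)) \<in> borel_measurable (borel \<Otimes>\<^sub>M borel)"
  shows "(\<lambda>z. k x z) \<in> borel_measurable borel" "(\<lambda>z. k z x) \<in> borel_measurable borel"
  using measurable_Pair2[OF k_meas, of x] measurable_Pair1[OF k_meas, of x] by simp_all

lemma mmd2_emp:
  fixes k :: "'q::topological_space \<Rightarrow> 'q \<Rightarrow> real" and y :: "int \<Rightarrow> 'a \<Rightarrow> 'q"
  assumes k_meas: "(\<lambda>z. k (fst z) (snd z)) \<in> borel_measurable (borel \<Otimes>\<^sub>M borel)"
    and kb: "\<And>x y. \<bar>k x y\<bar> \<le> 1" and T: "T \<ge> 1"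
    and P0: "prob_space P0" "sets P0 = sets borel"
  shows "mmd2 k (empirical_measure y T \<omega>) P0 =
     (\<Sum>s\<in>{1..int T}. \<Sum>t\<in>{1..int T}. k (y s \<omega>) (y t \<omega>)) / (real T)^2
     - 2 * ((\<Sum>t\<in>{1..int T}. (\<integral>z. k (y t \<omega>) z \<partial>P0)) / real T) + gram k P0 P0"
proof -
  let ?E = "empirical_measure y T \<omega>"
  note E = emp_facts[OF T, where y=y and \<omega>=\<omega>]
  have Tp: "real T > 0" using T by simp
  have g1: "gram k ?E ?E = (\<Sum>s\<in>{1..int T}. \<Sum>t\<in>{1..int T}. k (y s \<omega>) (y t \<omega>)) / (real T)^2"
  proof -
    have "gram k ?E ?E = (\<integral>x. (\<integral>z. k x z \<partial>?E) \<partial>?E)"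
      by (rule gram_fst(1)) (use k_meas kb E in auto)
    also have "\<dots> = (\<integral>x. (\<Sum>t\<in>{1..int T}. k x (y t \<omega>)) / real T \<partial>?E)"
      by (rule Bochner_Integration.integral_cong[OF refl]) (rule E(3), rule k_slices[OF k_meas])
    also have "\<dots> = (\<Sum>s\<in>{1..int T}. (\<Sum>t\<in>{1..int T}. k (y s \<omega>) (y t \<omega>)) / real T) / real T"
      by (rule E(3)) (use k_slices[OF k_meas] in auto)
    also have "\<dots> = (\<Sum>s\<in>{1..int T}. \<Sum>t\<in>{1..int T}. k (y s \<omega>) (y t \<omega>)) / (real T)^2"
      by (simp add: sum_divide_distrib[symmetric] power2_eq_square)
    finally show ?thesis .
  qed
  have g2: "gram k ?E P0 = (\<Sum>t\<in>{1..int T}. (\<integral>z. k (y t \<omega>) z \<partial>P0)) / real T"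
  proof -
    have "gram k ?E P0 = (\<integral>x. (\<integral>z. k x z \<partial>P0) \<partial>?E)"
      by (rule gram_fst(1)) (use k_meas kb E P0 in auto)
    also have "\<dots> = (\<Sum>t\<in>{1..int T}. (\<integral>z. k (y t \<omega>) z \<partial>P0)) / real T"
      by (rule E(3)) (rule gram_fst(2)[where P=P0], use k_meas kb P0 in auto)
    finally show ?thesis .
  qed
  show ?thesis by (simp add: mmd2_gram g1 g2)
qed


lemma stat_shift:
  fixes k :: "'q::topological_space \<Rightarrow> 'q \<Rightarrow> real" and y :: "int \<Rightarrow> 'a \<Rightarrow> 'q"
  assumes rv: "\<And>t. y t \<in> borel_measurable M"
    and stat: "strictly_stationary M y"
    and k_meas: "(\<lambda>z. k (fst z) (snd z)) \<in> borel_measurable (borel \<Otimes>\<^sub>M borel)"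
  shows "(\<integral>\<omega>. k (y (a+h) \<omega>) (y (b+h) \<omega>) \<partial>M) = (\<integral>\<omega>. k (y a \<omega>) (y b \<omega>) \<partial>M)"
proof -
  let ?J = "{a, b}"
  let ?N = "PiM ?J (\<lambda>_. borel) :: (int \<Rightarrow> 'q) measure"
  define F where "F x = k (x a) (x b)" for x :: "int \<Rightarrow> 'q"
  have Fm: "F \<in> borel_measurable ?N"
  proof -
    have "(\<lambda>x. (x a, x b)) \<in> measurable ?N (borel \<Otimes>\<^sub>M borel)"
      by (auto intro!: measurable_Pair measurable_component_singleton)
    from measurable_compose[OF this k_meas] show ?thesis by (simp add: F_def[abs_def])
  qed
  have Xm: "(\<lambda>\<omega>. \<lambda>t\<in>?J. y (t + c) \<omega>) \<in> measurable M ?N" for c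
    by (rule measurable_restrict) (rule rv)
  have eq: "distr M ?N (\<lambda>\<omega>. \<lambda>t\<in>?J. y (t + h) \<omega>) = distr M ?N (\<lambda>\<omega>. \<lambda>t\<in>?J. y t \<omega>)"
    using stat[unfolded strictly_stationary_def, rule_format, of ?J h] by simp
  have "(\<integral>\<omega>. k (y (a+h) \<omega>) (y (b+h) \<omega>) \<partial>M) = (\<integral>\<omega>. F (\<lambda>t\<in>?J. y (t + h) \<omega>) \<partial>M)"
    by (simp add: F_def)
  also have "\<dots> = (\<integral>x. F x \<partial>distr M ?N (\<lambda>\<omega>. \<lambda>t\<in>?J. y (t + h) \<omega>))"
    by (rule integral_distr[symmetric]) (rule Xm, rule Fm)
  also have "\<dots> = (\<integral>x. F x \<partial>distr M ?N (\<lambda>\<omega>. \<lambda>t\<in>?J. y t \<omega>))" by (simp only: eq)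
  also have "\<dots> = (\<integral>\<omega>. F (\<lambda>t\<in>?J. y t \<omega>) \<partial>M)"
    by (rule integral_distr) (rule measurable_restrict, rule rv, rule Fm)
  also have "\<dots> = (\<integral>\<omega>. k (y a \<omega>) (y b \<omega>) \<partial>M)" by (simp add: F_def)
  finally show ?thesis .
qed


lemma abs_integral_le1:
  fixes f :: "'b \<Rightarrow> real"
  assumes N: "prob_space N" and fb: "\<And>x. \<bar>f x\<bar> \<le> 1"
  shows "\<bar>\<integral>x. f x \<partial>N\<bar> \<le> 1"
proof (cases "integrable N f")
  case True
  interpret prob_space N by (rule N)
  have "\<bar>\<integral>x. f x \<partial>N\<bar> \<le> (\<integral>x. \<bar>f x\<bar> \<partial>N)" by (rule integral_abs_bound)
  also have "\<dots> \<le> (\<integral>x. 1 \<partial>N)"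
    by (rule Bochner_Integration.integral_mono) (use True fb in auto)
  also have "\<dots> = 1" by (simp add: prob_space)
  finally show ?thesis .
next
  case False then show ?thesis by (simp add: not_integrable_integral_eq)
qed

lemma sum_rp_bound:
  fixes r :: "int \<Rightarrow> real" and \<phi> :: "int \<Rightarrow> int"
  assumes r0: "\<And>h. 0 \<le> r h" and B: "finite B" and inj: "inj_on \<phi> B" and im: "\<And>t. t \<in> B \<Longrightarrow> \<phi> t \<le> U"
  shows "(\<Sum>t\<in>B. (if 1 \<le> \<phi> t then r (\<phi> t) else 0)) \<le> (\<Sum>h\<in>{1..U}. r h)"
proof -
  define rp where "rp h = (if 1 \<le> h then r h else 0)" for h
  have "(\<Sum>t\<in>B. (if 1 \<le> \<phi> t then r (\<phi> t) else 0)) = (\<Sum>h\<in>\<phi> ` B. rp h)"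
    using sum.reindex[OF inj, of rp] by (simp add: rp_def)
  also have "\<dots> = (\<Sum>h\<in>\<phi> ` B \<inter> {1..U}. rp h)"
    by (rule sum.mono_neutral_right) (use B im in \<open>auto simp: rp_def\<close>)
  also have "\<dots> \<le> (\<Sum>h\<in>{1..U}. rp h)"
    by (rule sum_mono2) (auto simp: rp_def r0)
  also have "\<dots> = (\<Sum>h\<in>{1..U}. r h)" by (intro sum.cong refl) (auto simp: rp_def)
  finally show ?thesis .
qed

lemma Sigma_T_int: "Sigma_T M k y T = (\<Sum>h\<in>{1..int T}. rho M k y h)"
proof -
  have "Sigma_T M k y T = (\<Sum>s\<in>{1..T}. rho M k y (int s))" by (simp add: Sigma_T_def)
  also have "\<dots> = (\<Sum>h\<in>int ` {1..T}. rho M k y h)"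
    by (subst sum.reindex) (auto simp: inj_on_def)
  also have "int ` {1..T} = {1..int T}" by (simp add: image_int_atLeastAtMost)
  finally show ?thesis .
qed


lemma exp_bound:
  fixes M :: "'a measure" and y :: "int \<Rightarrow> 'a \<Rightarrow> 'q::topological_space" and k :: "'q \<Rightarrow> 'q \<Rightarrow> real"
  assumes Mp: "prob_space M" and rv: "\<And>t. y t \<in> borel_measurable M"
    and stat: "strictly_stationary M y"
    and marg: "\<And>t. distr M borel (y t) = P0"
    and k_meas: "(\<lambda>z. k (fst z) (snd z)) \<in> borel_measurable (borel \<Otimes>\<^sub>M borel)"
    and sym: "symmetric_kernel k" and kb: "\<And>x y. \<bar>k x y\<bar> \<le> 1"
    and T: "T \<ge> 1"
  defines "Dx \<equiv> \<lambda>\<omega>. (\<Sum>s\<in>{1..int T}. \<Sum>t\<in>{1..int T}. k (y s \<omega>) (y t \<omega>)) / (real T)^2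
     - 2 * ((\<Sum>t\<in>{1..int T}. (\<integral>z. k (y t \<omega>) z \<partial>P0)) / real T) + gram k P0 P0"
  shows "Dx \<in> borel_measurable M" "integrable M Dx"
    "(\<integral>\<omega>. Dx \<omega> \<partial>M) \<le> (2 + 2 * Sigma_T M k y T) / real T"
proof -
  interpret prob_space M by (rule Mp)
  have P0p: "prob_space P0" using marg[of 0] prob_space_distr[OF rv[of 0]] by simp
  have P0s: "sets P0 = sets borel" using marg[of 0] by (metis sets_distr)
  define g where "g x = (\<integral>z. k x z \<partial>P0)" for x
  define A where "A = gram k P0 P0"
  have gm: "g \<in> borel_measurable borel"
    unfolding g_def[abs_def] by (rule gram_fst(2)[where P=P0]) (use k_meas kb P0p P0s in auto)
  have gb: "\<bar>g x\<bar> \<le> 1" for x unfolding g_def by (rule abs_integral_le1[OF P0p kb])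
  have kyy: "(\<lambda>\<omega>. k (y s \<omega>) (y t \<omega>)) \<in> borel_measurable M" for s t
    using measurable_compose[OF measurable_Pair[OF rv[of s] rv[of t]] k_meas] by simp
  have kyi: "integrable M (\<lambda>\<omega>. k (y s \<omega>) (y t \<omega>))" for s t
    by (rule integrable_const_bound[where B=1]) (use kb kyy in auto)
  have gy: "(\<lambda>\<omega>. g (y t \<omega>)) \<in> borel_measurable M" for t
    using measurable_compose[OF rv[of t] gm] by simp
  have gyi: "integrable M (\<lambda>\<omega>. g (y t \<omega>))" for t
    by (rule integrable_const_bound[where B=1]) (use gb gy in auto)
  have Dx_eq: "Dx = (\<lambda>\<omega>. (\<Sum>s\<in>{1..int T}. \<Sum>t\<in>{1..int T}. k (y s \<omega>) (y t \<omega>)) / (real T)^2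
     - 2 * ((\<Sum>t\<in>{1..int T}. g (y t \<omega>)) / real T) + A)"
    by (simp add: Dx_def g_def A_def)
  show "Dx \<in> borel_measurable M" unfolding Dx_eq
    by (intro borel_measurable_add borel_measurable_diff borel_measurable_times borel_measurable_divide
        borel_measurable_sum borel_measurable_const kyy gy)
  have si1: "integrable M (\<lambda>\<omega>. \<Sum>s\<in>{1..int T}. \<Sum>t\<in>{1..int T}. k (y s \<omega>) (y t \<omega>))"
    by (intro Bochner_Integration.integrable_sum kyi)
  have si2: "integrable M (\<lambda>\<omega>. \<Sum>t\<in>{1..int T}. g (y t \<omega>))"
    by (intro Bochner_Integration.integrable_sum gyi)
  show "integrable M Dx" unfolding Dx_eq
    using si1 si2 by (intro Bochner_Integration.integrable_add Bochner_Integration.integrable_diff integrable_mult_right integrable_divide_zero integrable_const) auto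
  have Eg: "(\<integral>\<omega>. g (y t \<omega>) \<partial>M) = A" for t
  proof -
    have "(\<integral>\<omega>. g (y t \<omega>) \<partial>M) = (\<integral>x. g x \<partial>distr M borel (y t))"
      by (rule integral_distr[symmetric]) (rule rv, rule gm)
    also have "\<dots> = (\<integral>x. g x \<partial>P0)" using marg by simp
    also have "\<dots> = A" unfolding A_def g_def
      by (rule gram_fst(1)[symmetric]) (use k_meas kb P0p P0s in auto)
    finally show ?thesis .
  qed
  define Ek where "Ek s t = (\<integral>\<omega>. k (y s \<omega>) (y t \<omega>) \<partial>M)" for s t
  have intD: "(\<integral>\<omega>. Dx \<omega> \<partial>M) = (\<Sum>s\<in>{1..int T}. \<Sum>t\<in>{1..int T}. Ek s t - A) / (real T)^2"
  proof -
    have "(\<integral>\<omega>. Dx \<omega> \<partial>M) = (\<Sum>s\<in>{1..int T}. \<Sum>t\<in>{1..int T}. Ek s t) / (real T)^2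
       - 2 * ((\<Sum>t\<in>{1..int T}. A) / real T) + A"
      unfolding Dx_eq Ek_def using si1 si2 kyi gyi
      by (simp add: Bochner_Integration.integral_sum Eg prob_space)
    also have "\<dots> = (\<Sum>s\<in>{1..int T}. \<Sum>t\<in>{1..int T}. Ek s t - A) / (real T)^2"
      using T by (simp add: sum_subtractf field_simps power2_eq_square)
    finally show ?thesis .
  qed
  define r where "r h = rho M k y h" for h
  have r0: "0 \<le> r h" for h by (simp add: r_def rho_def)
  have rho_eq: "r h = \<bar>Ek h 0 - A\<bar>" for h
    unfolding r_def rho_def Ek_def A_def gram_def using marg[of 0] by simp
  have Eksym: "Ek s t = Ek t s" for s t
    unfolding Ek_def using sym by (simp add: symmetric_kernel_def)
  have Ekshift: "Ek s t = Ek (s - t) 0" for s t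
    unfolding Ek_def using stat_shift[OF rv stat k_meas, of "s - t" t 0] by simp
  have Ab: "\<bar>A\<bar> \<le> 1" unfolding A_def
    using gram_fst(1)[OF k_meas kb P0p P0s P0p P0s] abs_integral_le1[OF P0p gb] by (simp add: g_def)
  have Ekb: "\<bar>Ek s t\<bar> \<le> 1" for s t unfolding Ek_def by (rule abs_integral_le1[OF Mp kb])
  have pt: "Ek s t - A \<le> (if s = t then 2 else 0) + (if 1 \<le> s - t then r (s - t) else 0)
       + (if 1 \<le> t - s then r (t - s) else 0)" for s t
  proof (cases "s = t")
    case True then show ?thesis using Ab Ekb[of s t] by simp
  next
    case False
    show ?thesis
    proof (cases "s < t")
      case True
      have "Ek s t - A = Ek (t - s) 0 - A" using Eksym Ekshift by metis
      also have "\<dots> \<le> r (t - s)" using rho_eq by simp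
      finally show ?thesis using True False r0 by simp
    next
      case False2: False
      have "Ek s t - A = Ek (s - t) 0 - A" using Ekshift by metis
      also have "\<dots> \<le> r (s - t)" using rho_eq by simp
      finally show ?thesis using False2 False r0 by simp
    qed
  qed
  define S where "S = (\<Sum>h\<in>{1..int T}. r h)"
  have rowb: "(\<Sum>t\<in>{1..int T}. Ek s t - A) \<le> 2 + 2 * S" if s: "s \<in> {1..int T}" for s
  proof -
    have "(\<Sum>t\<in>{1..int T}. Ek s t - A) \<le> (\<Sum>t\<in>{1..int T}. (if s = t then 2 else 0) + (if 1 \<le> s - t then r (s - t) else 0)
       + (if 1 \<le> t - s then r (t - s) else 0))"
      by (rule sum_mono) (rule pt)
    also have "\<dots> = (\<Sum>t\<in>{1..int T}. (if s = t then 2 else 0)) + (\<Sum>t\<in>{1..int T}. (if 1 \<le> s - t then r (s - t) else 0))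
       + (\<Sum>t\<in>{1..int T}. (if 1 \<le> t - s then r (t - s) else 0))"
      by (simp add: sum.distrib)
    also have "(\<Sum>t\<in>{1..int T}. (if s = t then 2 else 0)) = (2::real)"
      using s by (simp add: sum.delta)
    also have "(\<Sum>t\<in>{1..int T}. (if 1 \<le> s - t then r (s - t) else 0)) \<le> S"
      unfolding S_def by (rule sum_rp_bound[where \<phi>="\<lambda>t. s - t"]) (use r0 s in \<open>auto simp: inj_on_def\<close>)
    also have "(\<Sum>t\<in>{1..int T}. (if 1 \<le> t - s then r (t - s) else 0)) \<le> S"
      unfolding S_def by (rule sum_rp_bound[where \<phi>="\<lambda>t. t - s"]) (use r0 s in \<open>auto simp: inj_on_def\<close>)
    finally show ?thesis by simp
  qed
  have "(\<Sum>s\<in>{1..int T}. \<Sum>t\<in>{1..int T}. Ek s t - A) \<le> (\<Sum>s\<in>{1..int T}. 2 + 2 * S)"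
    by (rule sum_mono) (rule rowb)
  also have "\<dots> = real T * (2 + 2 * S)" by simp
  finally have tot: "(\<Sum>s\<in>{1..int T}. \<Sum>t\<in>{1..int T}. Ek s t - A) \<le> real T * (2 + 2 * S)" .
  have Tp: "real T > 0" using T by simp
  have "(\<integral>\<omega>. Dx \<omega> \<partial>M) \<le> real T * (2 + 2 * S) / (real T)^2"
    unfolding intD by (rule divide_right_mono[OF tot]) simp
  also have "\<dots> = (2 + 2 * S) / real T" using Tp by (simp add: power2_eq_square)
  also have "S = Sigma_T M k y T" by (simp add: S_def r_def Sigma_T_int)
  finally show "(\<integral>\<omega>. Dx \<omega> \<partial>M) \<le> (2 + 2 * Sigma_T M k y T) / real T" .
qed


theorem proposition3:
  fixes M :: "'a measure"
    and y :: "int \<Rightarrow> 'a \<Rightarrow> 'q::euclidean_space"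
    and P0 :: "'q measure"
    and k :: "'q \<Rightarrow> 'q \<Rightarrow> real"
    and \<Theta> :: "'d::euclidean_space set"
    and P :: "'d \<Rightarrow> 'q measure"
    and \<theta>hat :: "nat \<Rightarrow> 'a \<Rightarrow> 'd"
    and \<theta>star :: "'d"
  assumes "prob_space M"
    and rv: "\<And>t. y t \<in> borel_measurable M"
    and stat: "strictly_stationary M y"
    and marg: "\<And>t. distr M borel (y t) = P0"
    and k_meas: "(\<lambda>z. k (fst z) (snd z)) \<in> borel_measurable (borel \<Otimes>\<^sub>M borel)"
    and k_sym: "symmetric_kernel k"
    and k_pd: "pos_def_kernel k"
    and k_char: "characteristic_kernel k"
    and k_bdd: "\<And>x. \<bar>k x x\<bar> \<le> 1"
    and P_prob: "\<And>\<theta>. \<theta> \<in> \<Theta> \<Longrightarrow> prob_space (P \<theta>) \<and> sets (P \<theta>) = sets borel"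
    and est_in: "\<And>T \<omega>. T \<ge> 1 \<Longrightarrow> \<omega> \<in> space M \<Longrightarrow> \<theta>hat T \<omega> \<in> \<Theta>"
    and est_min: "\<And>T \<omega> \<theta>. T \<ge> 1 \<Longrightarrow> \<omega> \<in> space M \<Longrightarrow> \<theta> \<in> \<Theta> \<Longrightarrow>
        mmd k (P (\<theta>hat T \<omega>)) (empirical_measure y T \<omega>) \<le> mmd k (P \<theta>) (empirical_measure y T \<omega>)"
    and est_meas: "\<And>T. T \<ge> 1 \<Longrightarrow> \<theta>hat T \<in> borel_measurable M"
    and Sigma_o: "(\<lambda>T. Sigma_T M k y T) \<in> o(\<lambda>T. real T)"
    and ident1: "\<theta>star \<in> \<Theta> \<and> (\<forall>\<theta>\<in>\<Theta>. \<theta> \<noteq> \<theta>star \<longrightarrow> mmd k (P \<theta>star) P0 < mmd k (P \<theta>) P0)"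
    and ident2: "\<And>r. r > 0 \<Longrightarrow>
        (INF \<theta>\<in>{\<theta>\<in>\<Theta>. norm (\<theta> - \<theta>star) \<ge> r}. ereal (mmd k (P \<theta>) P0)) > ereal (mmd k (P \<theta>star) P0)"
  shows "\<forall>\<epsilon>>0. (\<lambda>T. measure M {\<omega>\<in>space M. norm (\<theta>hat T \<omega> - \<theta>star) \<ge> \<epsilon>}) \<longlonglongrightarrow> 0"
proof -
  interpret prob_space M by fact
  have Mp: "prob_space M" by fact
  have kb: "\<And>x y. \<bar>k x y\<bar> \<le> 1" using k_bound[OF k_pd k_sym k_bdd] by blast
  have P0p: "prob_space P0" using marg[of 0] prob_space_distr[OF rv[of 0]] by simp
  have P0s: "sets P0 = sets borel" using marg[of 0] by (metis sets_distr)
  have star_in: "\<theta>star \<in> \<Theta>" using ident1 by blast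
  define Dx where "Dx T \<omega> = (\<Sum>s\<in>{1..int T}. \<Sum>t\<in>{1..int T}. k (y s \<omega>) (y t \<omega>)) / (real T)^2
     - 2 * ((\<Sum>t\<in>{1..int T}. (\<integral>z. k (y t \<omega>) z \<partial>P0)) / real T) + gram k P0 P0" for T \<omega>
  note EB = exp_bound[OF Mp rv stat marg k_meas k_sym kb]
  have Dx_mmd: "mmd2 k (empirical_measure y T \<omega>) P0 = Dx T \<omega>" if "T \<ge> 1" for T \<omega>
    unfolding Dx_def by (rule mmd2_emp[OF k_meas kb that P0p P0s])
  show ?thesis
  proof (intro allI impI)
    fix \<epsilon> :: real assume eps: "\<epsilon> > 0"
    let ?S = "{\<theta>\<in>\<Theta>. norm (\<theta> - \<theta>star) \<ge> \<epsilon>}"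
    let ?Ds = "mmd k (P \<theta>star) P0"
    have "(INF \<theta>\<in>?S. ereal (mmd k (P \<theta>) P0)) > ereal ?Ds" by (rule ident2[OF eps])
    then obtain r where r1: "ereal ?Ds < r" and r2: "r < (INF \<theta>\<in>?S. ereal (mmd k (P \<theta>) P0))"
      using dense by blast
    then obtain r' where r': "r = ereal r'" by (cases r) auto
    define \<delta> where "\<delta> = r' - ?Ds"
    have dpos: "\<delta> > 0" using r1 r' by (simp add: \<delta>_def)
    have sep: "mmd k (P \<theta>) P0 \<ge> ?Ds + \<delta>" if "\<theta> \<in> ?S" for \<theta>
    proof -
      have "r < ereal (mmd k (P \<theta>) P0)" using r2 INF_lower[OF that, of "\<lambda>\<theta>. ereal (mmd k (P \<theta>) P0)"] by simp
      then show ?thesis using r' by (simp add: \<delta>_def)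
    qed
    have incl: "{\<omega>\<in>space M. norm (\<theta>hat T \<omega> - \<theta>star) \<ge> \<epsilon>} \<subseteq> {\<omega>\<in>space M. Dx T \<omega> \<ge> (\<delta>/2)^2}"
      if T: "T \<ge> 1" for T
    proof safe
      fix \<omega> assume \<omega>: "\<omega> \<in> space M" and far: "norm (\<theta>hat T \<omega> - \<theta>star) \<ge> \<epsilon>"
      let ?E = "empirical_measure y T \<omega>"
      let ?h = "\<theta>hat T \<omega>"
      have hin: "?h \<in> \<Theta>" by (rule est_in[OF T \<omega>])
      have Ep: "prob_space ?E" "sets ?E = sets borel" using emp_facts[OF T, where y=y and \<omega>=\<omega>] by auto
      have Ph: "prob_space (P ?h)" "sets (P ?h) = sets borel" using P_prob[OF hin] by auto
      have Ps: "prob_space (P \<theta>star)" "sets (P \<theta>star) = sets borel" using P_prob[OF star_in] by auto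
      have "?Ds + \<delta> \<le> mmd k (P ?h) P0" using sep hin far by auto
      also have "\<dots> \<le> mmd k (P ?h) ?E + mmd k ?E P0"
        by (rule mmd_triangle[OF k_meas k_pd k_sym kb]) (use Ph Ep P0p P0s in auto)
      also have "mmd k (P ?h) ?E \<le> mmd k (P \<theta>star) ?E" by (rule est_min[OF T \<omega> star_in])
      also have "mmd k (P \<theta>star) ?E \<le> ?Ds + mmd k P0 ?E"
        by (rule mmd_triangle[OF k_meas k_pd k_sym kb]) (use Ps Ep P0p P0s in auto)
      also have "mmd k P0 ?E = mmd k ?E P0"
        by (rule mmd_sym[OF k_meas k_sym]) (use Ep P0p P0s in auto)
      finally have "\<delta>/2 \<le> mmd k ?E P0" by simp
      moreover have nn: "0 \<le> mmd2 k ?E P0"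
        by (rule mmd2_nonneg[OF k_meas k_pd k_sym kb]) (use Ep P0p P0s in auto)
      ultimately have "(\<delta>/2)^2 \<le> (sqrt (mmd2 k ?E P0))^2"
        using dpos by (intro power_mono) (auto simp: mmd_def)
      then show "Dx T \<omega> \<ge> (\<delta>/2)^2" using nn Dx_mmd[OF T] by simp
    qed
    have bound: "measure M {\<omega>\<in>space M. norm (\<theta>hat T \<omega> - \<theta>star) \<ge> \<epsilon>}
        \<le> (2 + 2 * Sigma_T M k y T) / real T / (\<delta>/2)^2" if T: "T \<ge> 1" for T
    proof -
      have Dm: "Dx T \<in> borel_measurable M" and Di: "integrable M (Dx T)"
        and DE: "(\<integral>\<omega>. Dx T \<omega> \<partial>M) \<le> (2 + 2 * Sigma_T M k y T) / real T"
        using EB[OF T] unfolding Dx_def by auto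
      have "measure M {\<omega>\<in>space M. norm (\<theta>hat T \<omega> - \<theta>star) \<ge> \<epsilon>} \<le> measure M {\<omega>\<in>space M. Dx T \<omega> \<ge> (\<delta>/2)^2}"
        by (rule finite_measure_mono[OF incl[OF T]]) (use Dm in measurable)
      also have "\<dots> \<le> (\<integral>\<omega>. Dx T \<omega> \<partial>M) / (\<delta>/2)^2"
      proof (rule integral_Markov_inequality_measure[OF Di])
        show "space M \<in> sets M" by simp
        show "AE x in M. 0 \<le> Dx T x"
        proof (rule AE_I2)
          fix \<omega> assume "\<omega> \<in> space M"
          have "0 \<le> mmd2 k (empirical_measure y T \<omega>) P0"
            by (rule mmd2_nonneg[OF k_meas k_pd k_sym kb]) (use emp_facts[OF T, where y=y and \<omega>=\<omega>] P0p P0s in auto)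
          then show "0 \<le> Dx T \<omega>" using Dx_mmd[OF T] by simp
        qed
        show "0 < (\<delta>/2)^2" using dpos by simp
      qed
      also have "\<dots> \<le> (2 + 2 * Sigma_T M k y T) / real T / (\<delta>/2)^2"
        by (rule divide_right_mono[OF DE]) simp
      finally show ?thesis .
    qed
    have lim: "(\<lambda>T. (2 + 2 * Sigma_T M k y T) / real T / (\<delta>/2)^2) \<longlonglongrightarrow> 0"
    proof -
      have s: "(\<lambda>T. Sigma_T M k y T / real T) \<longlonglongrightarrow> 0" using smalloD_tendsto[OF Sigma_o] by simp
      have c: "(\<lambda>T. 2 / real T) \<longlonglongrightarrow> 0" by (rule lim_const_over_n)
      have "(\<lambda>T. (2 / real T + 2 * (Sigma_T M k y T / real T)) / (\<delta>/2)^2) \<longlonglongrightarrow> (0 + 2 * 0) / (\<delta>/2)^2"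
        using dpos by (intro tendsto_intros c s) simp
      then show ?thesis by (simp add: add_divide_distrib)
    qed
    show "(\<lambda>T. measure M {\<omega>\<in>space M. norm (\<theta>hat T \<omega> - \<theta>star) \<ge> \<epsilon>}) \<longlonglongrightarrow> 0"
    proof (rule tendsto_sandwich[OF _ _ tendsto_const lim])
      show "\<forall>\<^sub>F T in sequentially. 0 \<le> measure M {\<omega>\<in>space M. norm (\<theta>hat T \<omega> - \<theta>star) \<ge> \<epsilon>}" by simp
      show "\<forall>\<^sub>F T in sequentially. measure M {\<omega>\<in>space M. norm (\<theta>hat T \<omega> - \<theta>star) \<ge> \<epsilon>}
              \<le> (2 + 2 * Sigma_T M k y T) / real T / (\<delta>/2)^2"
        using eventually_ge_at_top[of 1] by eventually_elim (rule bound)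
    qed
  qed
qed


end
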